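(* Let $\mathcal C$ be a class of groups with invariant $\Lambda$-valued pseudo-norms which is closed under taking subgroups (with restricted pseudo-norm) and under isomorphism. Let $G$ be a finitely presented group and $\ell$ an invariant $\Lambda$-valued pseudo-norm on $G$. If $(G,\ell)$ is metrically LE$\mathcal C$, then $(G,\ell)$ is fully residually $\mathcal C$: for every finite $D\subseteq G$ and finite $Q\subseteq\Lambda\cap\mathbb Q$ with $0\in Q$ there are $(C,\ell_C)\in\mathcal C$ and a group homomorphism $\varphi:G\to C$ which is a $D$-$Q$-almost-homomorphism.
   Context: $\Lambda$ is a closed convex subset of $[0,\infty)$ containing $0$. A pseudo-norm on $G$ is $\ell:G\to\Lambda$ with $\ell(1)=0$, $\ell(g)=\ell(g^{-1})$, $\ell(gh)\le\ell(g)+\ell(h)$; invariant if $\ell(h^{-1}gh)=\ell(g)$. For pseudo-normed $(G_1,\ell_1),(G_2,\ell_2)$, finite $D\subseteq G_1$ and finite $Q\subseteq\Lambda\cap\mathbb Q$ with $0\in Q$, $\varphi:G_1\to G_2$ is a $D$-$Q$-almost-homomorphism if injective on $D$, $\varphi(hg)=\varphi(h)\varphi(g)$ whenever $h,g,hg\in D$, and $\ell_1(g)\,\square\,q\iff\ell_2(\varphi(g))\,\square\,q$ for all $g\in D,q\in Q,\square\in\{<,=,>\}$. $(G,\ell)$ is metrically LE$\mathcal C$ if for all such $D,Q$ there are $(C,\ell_C)\in\mathcal C$ and a $D$-$Q$-almost-homomorphism $G\to C$. *)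

theory Defs
  imports "HOL-Analysis.Analysis" "HOL-Algebra.Generated_Groups"
begin

definition pseudo_norm :: "real set \<Rightarrow> ('a, 'm) monoid_scheme \<Rightarrow> ('a \<Rightarrow> real) \<Rightarrow> bool" where
  "pseudo_norm \<Lambda> G l \<longleftrightarrow>
     (\<forall>g \<in> carrier G. l g \<in> \<Lambda>) \<and>
     l \<one>\<^bsub>G\<^esub> = 0 \<and>
     (\<forall>g \<in> carrier G. l g = l (inv\<^bsub>G\<^esub> g)) \<and>
     (\<forall>g \<in> carrier G. \<forall>h \<in> carrier G. l (g \<otimes>\<^bsub>G\<^esub> h) \<le> l g + l h)"

definition invariant_pseudo_norm :: "real set \<Rightarrow> ('a, 'm) monoid_scheme \<Rightarrow> ('a \<Rightarrow> real) \<Rightarrow> bool" where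
  "invariant_pseudo_norm \<Lambda> G l \<longleftrightarrow> pseudo_norm \<Lambda> G l \<and>
     (\<forall>g \<in> carrier G. \<forall>h \<in> carrier G. l (inv\<^bsub>G\<^esub> h \<otimes>\<^bsub>G\<^esub> g \<otimes>\<^bsub>G\<^esub> h) = l g)"

definition almost_hom ::
  "('a, 'm) monoid_scheme \<Rightarrow> ('a \<Rightarrow> real) \<Rightarrow> ('b, 'n) monoid_scheme \<Rightarrow> ('b \<Rightarrow> real)
    \<Rightarrow> 'a set \<Rightarrow> real set \<Rightarrow> ('a \<Rightarrow> 'b) \<Rightarrow> bool" where
  "almost_hom G1 l1 G2 l2 D Q \<phi> \<longleftrightarrow>
     \<phi> \<in> carrier G1 \<rightarrow> carrier G2 \<and>
     inj_on \<phi> D \<and>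
     (\<forall>h \<in> D. \<forall>g \<in> D. h \<otimes>\<^bsub>G1\<^esub> g \<in> D \<longrightarrow> \<phi> (h \<otimes>\<^bsub>G1\<^esub> g) = \<phi> h \<otimes>\<^bsub>G2\<^esub> \<phi> g) \<and>
     (\<forall>g \<in> D. \<forall>q \<in> Q.
        (l1 g < q \<longleftrightarrow> l2 (\<phi> g) < q) \<and>
        (l1 g = q \<longleftrightarrow> l2 (\<phi> g) = q) \<and>
        (l1 g > q \<longleftrightarrow> l2 (\<phi> g) > q))"

definition admissible_data :: "real set \<Rightarrow> ('a, 'm) monoid_scheme \<Rightarrow> 'a set \<Rightarrow> real set \<Rightarrow> bool" where
  "admissible_data \<Lambda> G D Q \<longleftrightarrow>
     finite D \<and> D \<subseteq> carrier G \<and> finite Q \<and> Q \<subseteq> \<Lambda> \<inter> \<rat> \<and> 0 \<in> Q"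

definition metrically_LE ::
  "real set \<Rightarrow> ('b monoid \<times> ('b \<Rightarrow> real)) set \<Rightarrow> ('a, 'm) monoid_scheme \<Rightarrow> ('a \<Rightarrow> real) \<Rightarrow> bool" where
  "metrically_LE \<Lambda> \<C> G l \<longleftrightarrow>
     (\<forall>D Q. admissible_data \<Lambda> G D Q \<longrightarrow>
        (\<exists>(C, lC) \<in> \<C>. \<exists>\<phi>. almost_hom G l C lC D Q \<phi>))"

definition fully_residually ::
  "real set \<Rightarrow> ('b monoid \<times> ('b \<Rightarrow> real)) set \<Rightarrow> ('a, 'm) monoid_scheme \<Rightarrow> ('a \<Rightarrow> real) \<Rightarrow> bool" where
  "fully_residually \<Lambda> \<C> G l \<longleftrightarrow>
     (\<forall>D Q. admissible_data \<Lambda> G D Q \<longrightarrow>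
        (\<exists>(C, lC) \<in> \<C>. \<exists>\<phi> \<in> hom G C. almost_hom G l C lC D Q \<phi>))"

text \<open>Words over a set of generators: (True, s) stands for s, (False, s) for s\<inverse>.\<close>
type_synonym 'a word = "(bool \<times> 'a) list"

definition word_eval :: "('a, 'm) monoid_scheme \<Rightarrow> 'a word \<Rightarrow> 'a" where
  "word_eval G w = foldr (\<lambda>(b, s) acc. (if b then s else inv\<^bsub>G\<^esub> s) \<otimes>\<^bsub>G\<^esub> acc) w \<one>\<^bsub>G\<^esub>"

text \<open>Elementary moves of the presentation \<langle>S | R\<rangle>: insertion of a cancelling pair
  or of a relator at an arbitrary position.\<close>
definition pres_step :: "'a set \<Rightarrow> 'a word set \<Rightarrow> 'a word \<Rightarrow> 'a word \<Rightarrow> bool" where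
  "pres_step S R x y \<longleftrightarrow> (\<exists>u v. x = u @ v \<and>
      ((\<exists>b s. s \<in> S \<and> y = u @ [(b, s), (\<not> b, s)] @ v) \<or>
       (\<exists>r \<in> R. y = u @ r @ v)))"

text \<open>Equality in the group presented by \<langle>S | R\<rangle>: equivalence closure of the moves.\<close>
definition pres_equiv :: "'a set \<Rightarrow> 'a word set \<Rightarrow> 'a word \<Rightarrow> 'a word \<Rightarrow> bool" where
  "pres_equiv S R = (\<lambda>x y. pres_step S R x y \<or> pres_step S R y x)\<^sup>*\<^sup>*"

text \<open>G is finitely presented: a finite generating set S and finitely many relators R
  such that G is the group presented by \<langle>S | R\<rangle> via the evaluation map, i.e. a word
  over S is trivial in G iff it is trivial in \<langle>S | R\<rangle>.\<close>
definition finitely_presented :: "('a, 'm) monoid_scheme \<Rightarrow> bool" where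
  "finitely_presented G \<longleftrightarrow> (\<exists>S R.
     finite S \<and> S \<subseteq> carrier G \<and> generate G S = carrier G \<and>
     finite R \<and> R \<subseteq> lists (UNIV \<times> S) \<and>
     (\<forall>w \<in> lists (UNIV \<times> S). word_eval G w = \<one>\<^bsub>G\<^esub> \<longleftrightarrow> pres_equiv S R w []))"

end

theory Submission
  imports Defs
begin


definition letter :: "('a,'m) monoid_scheme \<Rightarrow> bool \<times> 'a \<Rightarrow> 'a" where
  "letter G x = (if fst x then snd x else inv\<^bsub>G\<^esub> (snd x))"

definition flip :: "bool \<times> 'a \<Rightarrow> bool \<times> 'a" where "flip x = (\<not> fst x, snd x)"

definition wimg :: "'b monoid \<Rightarrow> ('a \<Rightarrow> 'b) \<Rightarrow> ('a,'m) monoid_scheme \<Rightarrow> 'a word \<Rightarrow> 'b" where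
  "wimg C \<phi> G w = foldr (\<lambda>x acc. \<phi> (letter G x) \<otimes>\<^bsub>C\<^esub> acc) w \<one>\<^bsub>C\<^esub>"

definition sufs :: "('a,'m) monoid_scheme \<Rightarrow> 'a word \<Rightarrow> 'a set" where
  "sufs G w = (\<lambda>k. word_eval G (drop k w)) ` {..length w}"

lemma word_eval_Nil[simp]: "word_eval G [] = \<one>\<^bsub>G\<^esub>"
  by (simp add: word_eval_def)

lemma word_eval_Cons[simp]: "word_eval G (x # w) = letter G x \<otimes>\<^bsub>G\<^esub> word_eval G w"
  by (cases x) (simp add: word_eval_def letter_def)

lemma wimg_Nil[simp]: "wimg C \<phi> G [] = \<one>\<^bsub>C\<^esub>" by (simp add: wimg_def)
lemma wimg_Cons[simp]: "wimg C \<phi> G (x # w) = \<phi> (letter G x) \<otimes>\<^bsub>C\<^esub> wimg C \<phi> G w"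
  by (simp add: wimg_def)

lemma finite_sufs: "finite (sufs G w)" by (simp add: sufs_def)

lemma in_sufs: "word_eval G (drop k w) \<in> sufs G w"
proof (cases "k \<le> length w")
  case True thus ?thesis by (auto simp: sufs_def)
next
  case False
  hence "drop k w = drop (length w) w" by simp
  thus ?thesis unfolding sufs_def by (metis atMost_iff image_eqI order_refl)
qed

lemma letter_car: "group G \<Longrightarrow> snd x \<in> carrier G \<Longrightarrow> letter G x \<in> carrier G"
  by (simp add: letter_def)

lemma word_eval_car: "group G \<Longrightarrow> w \<in> lists (UNIV \<times> carrier G) \<Longrightarrow> word_eval G w \<in> carrier G"
  by (induction w) (auto simp: letter_car group.is_monoid monoid.m_closed)

lemma word_eval_append: "group G \<Longrightarrow> u \<in> lists (UNIV \<times> carrier G) \<Longrightarrow> v \<in> lists (UNIV \<times> carrier G)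
  \<Longrightarrow> word_eval G (u @ v) = word_eval G u \<otimes>\<^bsub>G\<^esub> word_eval G v"
proof (induction u)
  case Nil thus ?case by (simp add: word_eval_car group.is_monoid monoid.l_one)
next
  case (Cons x u)
  have "letter G x \<in> carrier G" "word_eval G u \<in> carrier G" "word_eval G v \<in> carrier G"
    using Cons.prems by (auto simp: letter_car word_eval_car)
  thus ?case using Cons by (simp add: group.is_monoid monoid.m_assoc)
qed

lemma letter_flip: "group G \<Longrightarrow> snd x \<in> carrier G \<Longrightarrow> letter G (flip x) = inv\<^bsub>G\<^esub> (letter G x)"
  by (auto simp: letter_def flip_def)

lemma word_eval_rev: "group G \<Longrightarrow> w \<in> lists (UNIV \<times> carrier G) \<Longrightarrow>
   word_eval G (rev (map flip w)) = inv\<^bsub>G\<^esub> (word_eval G w)"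
proof (induction w)
  case Nil thus ?case by (simp add: monoid.inv_one group.is_monoid)
next
  case (Cons x w)
  have fl: "[flip x] \<in> lists (UNIV \<times> carrier G)" "rev (map flip w) \<in> lists (UNIV \<times> carrier G)"
    using Cons.prems by (auto simp: flip_def) (metis SigmaD2 in_listsD)
  have "word_eval G (rev (map flip (x # w))) = word_eval G (rev (map flip w)) \<otimes>\<^bsub>G\<^esub> word_eval G [flip x]"
    using word_eval_append[OF Cons.prems(1) fl(2) fl(1)] by simp
  also have "\<dots> = inv\<^bsub>G\<^esub> (word_eval G w) \<otimes>\<^bsub>G\<^esub> inv\<^bsub>G\<^esub> (letter G x)"
    using Cons by (auto simp: letter_flip letter_car group.is_monoid monoid.r_one group.inv_closed)
  also have "\<dots> = inv\<^bsub>G\<^esub> (letter G x \<otimes>\<^bsub>G\<^esub> word_eval G w)"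
  proof -
    have "letter G x \<in> carrier G" "word_eval G w \<in> carrier G"
      using Cons.prems by (auto simp: letter_car word_eval_car)
    thus ?thesis using Cons.prems(1) group.inv_mult_group[of G "letter G x" "word_eval G w"] by simp
  qed
  finally show ?case by simp
qed

lemma generate_words: "g \<in> generate G S \<Longrightarrow> group G \<Longrightarrow> S \<subseteq> carrier G \<Longrightarrow>
   \<exists>w \<in> lists (UNIV \<times> S). word_eval G w = g"
proof (induction rule: generate.induct)
  case one thus ?case by (intro bexI[of _ "[]"]) auto
next
  case (incl h) thus ?case
    by (intro bexI[of _ "[(True,h)]"]) (auto simp: letter_def group.is_monoid monoid.r_one subsetD)
next
  case (inv h) thus ?case
    by (intro bexI[of _ "[(False,h)]"]) (auto simp: letter_def group.is_monoid monoid.r_one subsetD)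
next
  case (eng h1 h2)
  then obtain w1 w2 where w: "w1 \<in> lists (UNIV \<times> S)" "w2 \<in> lists (UNIV \<times> S)"
    "word_eval G w1 = h1" "word_eval G w2 = h2" by blast
  have "w1 \<in> lists (UNIV \<times> carrier G)" "w2 \<in> lists (UNIV \<times> carrier G)"
    using w eng.prems by auto
  thus ?case using w word_eval_append[OF eng.prems(1)] by (intro bexI[of _ "w1 @ w2"]) auto
qed

locale fp_setup =
  fixes G :: "('a,'m) monoid_scheme" and C :: "'b monoid" and S :: "'a set"
    and R :: "'a word set" and Dp :: "'a set" and \<phi> :: "'a \<Rightarrow> 'b"
  assumes G: "group G" and C: "group C" and SG: "S \<subseteq> carrier G"
    and Rl: "R \<subseteq> lists (UNIV \<times> S)"
    and pres: "\<forall>w\<in>lists (UNIV \<times> S). word_eval G w = \<one>\<^bsub>G\<^esub> \<longleftrightarrow> pres_equiv S R w []"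
    and one: "\<one>\<^bsub>G\<^esub> \<in> Dp"
    and lets: "\<forall>x\<in>UNIV \<times> S. letter G x \<in> Dp"
    and Rsuf: "\<forall>r\<in>R. \<forall>k. word_eval G (drop k r) \<in> Dp"
    and phi_car: "\<forall>x\<in>Dp. \<phi> x \<in> carrier C"
    and phi_mult: "\<forall>h\<in>Dp. \<forall>g\<in>Dp. h \<otimes>\<^bsub>G\<^esub> g \<in> Dp \<longrightarrow> \<phi> (h \<otimes>\<^bsub>G\<^esub> g) = \<phi> h \<otimes>\<^bsub>C\<^esub> \<phi> g"
begin

lemma SGl: "w \<in> lists (UNIV \<times> S) \<Longrightarrow> w \<in> lists (UNIV \<times> carrier G)"
  using SG by auto

lemma phi_one: "\<phi> \<one>\<^bsub>G\<^esub> = \<one>\<^bsub>C\<^esub>"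
proof -
  have c: "\<phi> \<one>\<^bsub>G\<^esub> \<in> carrier C" using phi_car one by auto
  have o: "\<one>\<^bsub>G\<^esub> \<otimes>\<^bsub>G\<^esub> \<one>\<^bsub>G\<^esub> = \<one>\<^bsub>G\<^esub>"
    using G by (simp add: group.is_monoid monoid.one_closed monoid.l_one)
  have "\<phi> \<one>\<^bsub>G\<^esub> = \<phi> \<one>\<^bsub>G\<^esub> \<otimes>\<^bsub>C\<^esub> \<phi> \<one>\<^bsub>G\<^esub>"
    using phi_mult one o by (metis (no_types))
  thus ?thesis using group.l_cancel_one'[OF C c c] by simp
qed

lemma wimg_car: "w \<in> lists (UNIV \<times> S) \<Longrightarrow> wimg C \<phi> G w \<in> carrier C"
  by (induction w) (use C phi_car lets in \<open>auto simp: group.is_monoid monoid.m_closed\<close>)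

lemma wimg_append: "u \<in> lists (UNIV \<times> S) \<Longrightarrow> v \<in> lists (UNIV \<times> S)
  \<Longrightarrow> wimg C \<phi> G (u @ v) = wimg C \<phi> G u \<otimes>\<^bsub>C\<^esub> wimg C \<phi> G v"
proof (induction u)
  case Nil thus ?case using C by (simp add: wimg_car group.is_monoid monoid.l_one)
next
  case (Cons x u)
  have "\<phi> (letter G x) \<in> carrier C" "wimg C \<phi> G u \<in> carrier C" "wimg C \<phi> G v \<in> carrier C"
    using Cons.prems phi_car lets by (auto simp: wimg_car)
  thus ?case using Cons C by (simp add: group.is_monoid monoid.m_assoc)
qed

lemma agree: "w \<in> lists (UNIV \<times> S) \<Longrightarrow> \<forall>k. word_eval G (drop k w) \<in> Dp
   \<Longrightarrow> \<phi> (word_eval G w) = wimg C \<phi> G w"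
proof (induction w)
  case Nil thus ?case by (simp add: phi_one)
next
  case (Cons x w)
  have a: "\<forall>k. word_eval G (drop k w) \<in> Dp"
  proof
    fix k show "word_eval G (drop k w) \<in> Dp" using Cons.prems(2)[rule_format, of "Suc k"] by simp
  qed
  have b: "word_eval G w \<in> Dp" using a[rule_format, of 0] by simp
  have c: "letter G x \<in> Dp" using lets Cons.prems(1) by auto
  have d: "letter G x \<otimes>\<^bsub>G\<^esub> word_eval G w \<in> Dp" using Cons.prems(2)[rule_format, of 0] by simp
  show ?case using phi_mult b c d Cons a by simp
qed

lemma cancel: "x \<in> UNIV \<times> S \<Longrightarrow> \<phi> (letter G x) \<otimes>\<^bsub>C\<^esub> \<phi> (letter G (flip x)) = \<one>\<^bsub>C\<^esub>"
proof -
  assume x: "x \<in> UNIV \<times> S"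
  have f: "flip x \<in> UNIV \<times> S" using x by (auto simp: flip_def)
  have s: "snd x \<in> carrier G" using x SG by auto
  have "letter G x \<otimes>\<^bsub>G\<^esub> letter G (flip x) = \<one>\<^bsub>G\<^esub>"
    using G s by (simp add: letter_flip letter_car group.r_inv)
  moreover have "letter G x \<in> Dp" "letter G (flip x) \<in> Dp" using lets x f by auto
  ultimately have "\<phi> (letter G x \<otimes>\<^bsub>G\<^esub> letter G (flip x)) = \<phi> (letter G x) \<otimes>\<^bsub>C\<^esub> \<phi> (letter G (flip x))"
    using phi_mult[rule_format, of "letter G x" "letter G (flip x)"] one by (simp add: \<open>letter G x \<otimes>\<^bsub>G\<^esub> letter G (flip x) = \<one>\<^bsub>G\<^esub>\<close>)
  thus ?thesis using \<open>letter G x \<otimes>\<^bsub>G\<^esub> letter G (flip x) = \<one>\<^bsub>G\<^esub>\<close> phi_one by simp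
qed

lemma phi_flip: "x \<in> UNIV \<times> S \<Longrightarrow> \<phi> (letter G (flip x)) = inv\<^bsub>C\<^esub> \<phi> (letter G x)"
proof -
  assume x: "x \<in> UNIV \<times> S"
  have f: "flip x \<in> UNIV \<times> S" using x by (auto simp: flip_def)
  have a: "\<phi> (letter G x) \<in> carrier C" "\<phi> (letter G (flip x)) \<in> carrier C" using phi_car lets x f by auto
  have "\<phi> (letter G (flip x)) \<otimes>\<^bsub>C\<^esub> \<phi> (letter G x) = \<one>\<^bsub>C\<^esub>"
    using group.inv_comm[OF C cancel[OF x] a] .
  from group.inv_equality[OF C this a] show ?thesis by simp
qed

lemma wimg_rev: "w \<in> lists (UNIV \<times> S) \<Longrightarrow> wimg C \<phi> G (rev (map flip w)) = inv\<^bsub>C\<^esub> (wimg C \<phi> G w)"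
proof (induction w)
  case Nil thus ?case using C by (simp add: monoid.inv_one group.is_monoid)
next
  case (Cons x w)
  have x: "x \<in> UNIV \<times> S" using Cons by auto
  have fl: "[flip x] \<in> lists (UNIV \<times> S)" "rev (map flip w) \<in> lists (UNIV \<times> S)"
    using Cons.prems by (auto simp: flip_def) (metis SigmaD2 in_listsD)
  have "wimg C \<phi> G (rev (map flip (x # w))) = wimg C \<phi> G (rev (map flip w)) \<otimes>\<^bsub>C\<^esub> wimg C \<phi> G [flip x]"
    using wimg_append[OF fl(2) fl(1)] by simp
  also have "\<dots> = inv\<^bsub>C\<^esub> (wimg C \<phi> G w) \<otimes>\<^bsub>C\<^esub> inv\<^bsub>C\<^esub> (\<phi> (letter G x))"
  proof -
    have "\<phi> (letter G x) \<in> carrier C" using x phi_car lets by auto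
    thus ?thesis using Cons x C by (simp add: phi_flip group.is_monoid monoid.r_one group.inv_closed)
  qed
  also have "\<dots> = inv\<^bsub>C\<^esub> (\<phi> (letter G x) \<otimes>\<^bsub>C\<^esub> wimg C \<phi> G w)"
  proof -
    have "\<phi> (letter G x) \<in> carrier C" "wimg C \<phi> G w \<in> carrier C"
      using Cons.prems x phi_car lets by (auto simp: wimg_car)
    thus ?thesis using C group.inv_mult_group[of C "\<phi> (letter G x)" "wimg C \<phi> G w"] by simp
  qed
  finally show ?case by simp
qed

lemma relator: "r \<in> R \<Longrightarrow> wimg C \<phi> G r = \<one>\<^bsub>C\<^esub>"
proof -
  assume r: "r \<in> R"
  have rl: "r \<in> lists (UNIV \<times> S)" using r Rl by auto
  have "pres_step S R [] r" unfolding pres_step_def using r by force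
  hence "pres_equiv S R r []" unfolding pres_equiv_def by (simp add: r_into_rtranclp)
  hence "word_eval G r = \<one>\<^bsub>G\<^esub>" using pres rl by auto
  moreover have "\<phi> (word_eval G r) = wimg C \<phi> G r" using agree rl Rsuf r by auto
  ultimately show ?thesis by (simp add: phi_one)
qed

lemma step_inv: "pres_step S R x y \<Longrightarrow> x \<in> lists (UNIV \<times> S) \<or> y \<in> lists (UNIV \<times> S) \<Longrightarrow>
   x \<in> lists (UNIV \<times> S) \<and> y \<in> lists (UNIV \<times> S) \<and> wimg C \<phi> G x = wimg C \<phi> G y"
proof -
  assume st: "pres_step S R x y" and l: "x \<in> lists (UNIV \<times> S) \<or> y \<in> lists (UNIV \<times> S)"
  from st obtain u v where xe: "x = u @ v" and
    alt: "(\<exists>b s. s \<in> S \<and> y = u @ [(b, s), (\<not> b, s)] @ v) \<or> (\<exists>r \<in> R. y = u @ r @ v)"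
    unfolding pres_step_def by blast
  have uv: "u \<in> lists (UNIV \<times> S) \<and> v \<in> lists (UNIV \<times> S)" using l xe alt Rl by auto
  from alt show ?thesis
  proof
    assume "\<exists>b s. s \<in> S \<and> y = u @ [(b, s), (\<not> b, s)] @ v"
    then obtain b s where s: "s \<in> S" and ye: "y = u @ [(b, s), (\<not> b, s)] @ v" by blast
    have p: "[(b, s), (\<not> b, s)] \<in> lists (UNIV \<times> S)" using s by auto
    have "wimg C \<phi> G [(b, s), (\<not> b, s)] = \<one>\<^bsub>C\<^esub>"
      using cancel[of "(b,s)"] s C phi_car lets by (simp add: flip_def group.is_monoid monoid.r_one)
    moreover have "wimg C \<phi> G y = wimg C \<phi> G u \<otimes>\<^bsub>C\<^esub> (wimg C \<phi> G [(b, s), (\<not> b, s)] \<otimes>\<^bsub>C\<^esub> wimg C \<phi> G v)"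
      using ye uv p wimg_append by (metis append_in_lists_conv)
    ultimately show ?thesis using uv xe ye wimg_append wimg_car C p
      by (simp add: group.is_monoid monoid.l_one del: wimg_Cons)
  next
    assume "\<exists>r \<in> R. y = u @ r @ v"
    then obtain r where r: "r \<in> R" and ye: "y = u @ r @ v" by blast
    have p: "r \<in> lists (UNIV \<times> S)" using r Rl by auto
    thus ?thesis using uv p xe ye wimg_append wimg_car C relator[OF r]
      by (simp add: group.is_monoid monoid.l_one)
  qed
qed

lemma equiv_inv: "pres_equiv S R x y \<Longrightarrow> x \<in> lists (UNIV \<times> S) \<Longrightarrow>
   y \<in> lists (UNIV \<times> S) \<and> wimg C \<phi> G x = wimg C \<phi> G y"
  unfolding pres_equiv_def
proof (induction rule: rtranclp_induct)
  case base thus ?case by simp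
next
  case (step y z)
  thus ?case using step_inv by metis
qed

lemma welldef: "w1 \<in> lists (UNIV \<times> S) \<Longrightarrow> w2 \<in> lists (UNIV \<times> S) \<Longrightarrow>
   word_eval G w1 = word_eval G w2 \<Longrightarrow> wimg C \<phi> G w1 = wimg C \<phi> G w2"
proof -
  assume w1: "w1 \<in> lists (UNIV \<times> S)" and w2: "w2 \<in> lists (UNIV \<times> S)" and e: "word_eval G w1 = word_eval G w2"
  have w2': "rev (map flip w2) \<in> lists (UNIV \<times> S)" using w2 by (auto simp: flip_def) (metis SigmaD2 in_listsD)
  have ww: "w1 @ rev (map flip w2) \<in> lists (UNIV \<times> S)" using w1 w2' by auto
  have "word_eval G (w1 @ rev (map flip w2)) = word_eval G w1 \<otimes>\<^bsub>G\<^esub> inv\<^bsub>G\<^esub> (word_eval G w2)"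
    using word_eval_append[OF G SGl[OF w1] SGl[OF w2']] word_eval_rev[OF G SGl[OF w2]] by simp
  also have "\<dots> = \<one>\<^bsub>G\<^esub>" using e G word_eval_car[OF G SGl[OF w2]] by (simp add: group.r_inv)
  finally have "pres_equiv S R (w1 @ rev (map flip w2)) []" using pres ww by auto
  hence "wimg C \<phi> G (w1 @ rev (map flip w2)) = \<one>\<^bsub>C\<^esub>" using equiv_inv ww by fastforce
  hence "wimg C \<phi> G w1 \<otimes>\<^bsub>C\<^esub> inv\<^bsub>C\<^esub> (wimg C \<phi> G w2) = \<one>\<^bsub>C\<^esub>"
    using wimg_append[OF w1 w2'] wimg_rev[OF w2] by simp
  moreover have ic: "inv\<^bsub>C\<^esub> (wimg C \<phi> G w2) \<in> carrier C" using C wimg_car[OF w2] by (simp add: group.inv_closed)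
  ultimately have "inv\<^bsub>C\<^esub> (wimg C \<phi> G w2) \<otimes>\<^bsub>C\<^esub> wimg C \<phi> G w1 = \<one>\<^bsub>C\<^esub>"
    using group.inv_comm[OF C _ wimg_car[OF w1] ic] by blast
  from group.inv_equality[OF C this wimg_car[OF w1] ic]
  have "inv\<^bsub>C\<^esub> (wimg C \<phi> G w1) = inv\<^bsub>C\<^esub> (wimg C \<phi> G w2)" .
  thus ?thesis using C wimg_car[OF w1] wimg_car[OF w2] by (metis group.inv_inv)
qed

end


theorem corollary5p6:
  fixes \<Lambda> :: "real set"
    and \<C> :: "('b monoid \<times> ('b \<Rightarrow> real)) set"
    and G :: "('a, 'm) monoid_scheme"
    and l :: "'a \<Rightarrow> real"
  assumes Lambda_closed: "closed \<Lambda>"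
    and Lambda_convex: "convex \<Lambda>"
    and Lambda_nonneg: "\<Lambda> \<subseteq> {0..}"
    and Lambda_zero: "0 \<in> \<Lambda>"
    and C_groups: "\<And>C lC. (C, lC) \<in> \<C> \<Longrightarrow> group C \<and> invariant_pseudo_norm \<Lambda> C lC"
    and C_subgroups: "\<And>C lC H. (C, lC) \<in> \<C> \<Longrightarrow> subgroup H C \<Longrightarrow> (C\<lparr>carrier := H\<rparr>, lC) \<in> \<C>"
    and C_iso: "\<And>C lC C' lC' f. (C, lC) \<in> \<C> \<Longrightarrow> group C' \<Longrightarrow> f \<in> iso C C'
                  \<Longrightarrow> (\<forall>x \<in> carrier C. lC' (f x) = lC x) \<Longrightarrow> (C', lC') \<in> \<C>"
    and G_group: "group G"
    and G_fp: "finitely_presented G"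
    and l_norm: "invariant_pseudo_norm \<Lambda> G l"
    and LE: "metrically_LE \<Lambda> \<C> G l"
  shows "fully_residually \<Lambda> \<C> G l"
  unfolding fully_residually_def
proof (intro allI impI)
  fix D Q assume adm: "admissible_data \<Lambda> G D Q"
  obtain S R where S: "finite S" "S \<subseteq> carrier G" "generate G S = carrier G"
    and R: "finite R" "R \<subseteq> lists (UNIV \<times> S)"
    and pres: "\<forall>w \<in> lists (UNIV \<times> S). word_eval G w = \<one>\<^bsub>G\<^esub> \<longleftrightarrow> pres_equiv S R w []"
    using G_fp unfolding finitely_presented_def by blast
  define wd where "wd g = (SOME w. w \<in> lists (UNIV \<times> S) \<and> word_eval G w = g)" for g
  have wd: "wd g \<in> lists (UNIV \<times> S) \<and> word_eval G (wd g) = g" if "g \<in> carrier G" for g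
  proof -
    have "\<exists>w \<in> lists (UNIV \<times> S). word_eval G w = g"
      using generate_words[of g G S] that S G_group by auto
    thus ?thesis unfolding wd_def by (metis (mono_tags, lifting) someI_ex)
  qed
  have Dc: "D \<subseteq> carrier G" "finite D" using adm unfolding admissible_data_def by auto
  define Dp where "Dp = D \<union> {\<one>\<^bsub>G\<^esub>} \<union> letter G ` (UNIV \<times> S) \<union> (\<Union>d\<in>D. sufs G (wd d)) \<union> (\<Union>r\<in>R. sufs G r)"
  have SGl: "w \<in> lists (UNIV \<times> S) \<Longrightarrow> w \<in> lists (UNIV \<times> carrier G)" for w using S by auto
  have sufs_car: "w \<in> lists (UNIV \<times> S) \<Longrightarrow> sufs G w \<subseteq> carrier G" for w
  proof
    fix x assume w: "w \<in> lists (UNIV \<times> S)" and "x \<in> sufs G w"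
    then obtain k where "x = word_eval G (drop k w)" unfolding sufs_def by auto
    moreover have "drop k w \<in> lists (UNIV \<times> carrier G)" using SGl[OF w] by (meson in_lists_conv_set in_set_dropD)
    ultimately show "x \<in> carrier G" using word_eval_car G_group by auto
  qed
  have Dp_car: "Dp \<subseteq> carrier G"
    unfolding Dp_def
  proof (intro Un_least)
    show "D \<subseteq> carrier G" using Dc by simp
    show "{\<one>\<^bsub>G\<^esub>} \<subseteq> carrier G" using G_group by (simp add: group.is_monoid monoid.one_closed)
    show "letter G ` (UNIV \<times> S) \<subseteq> carrier G" using S G_group by (auto simp: letter_car)
    show "(\<Union>r\<in>R. sufs G r) \<subseteq> carrier G"
    proof (rule UN_least)
      fix r assume "r \<in> R" thus "sufs G r \<subseteq> carrier G" using sufs_car R(2) by auto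
    qed
    show "(\<Union>d\<in>D. sufs G (wd d)) \<subseteq> carrier G"
    proof (rule UN_least)
      fix d assume "d \<in> D" thus "sufs G (wd d) \<subseteq> carrier G" using sufs_car wd Dc by auto
    qed
  qed
  have Dp_fin: "finite Dp" unfolding Dp_def using Dc S R by (auto simp: finite_sufs)
  have "admissible_data \<Lambda> G Dp Q" using adm Dp_car Dp_fin unfolding admissible_data_def by auto
  then obtain C lC \<phi> where CC: "(C, lC) \<in> \<C>" and ah: "almost_hom G l C lC Dp Q \<phi>"
    using LE unfolding metrically_LE_def by blast
  have Cg: "group C" using C_groups CC by blast
  have phi_car: "\<forall>x\<in>Dp. \<phi> x \<in> carrier C" using ah Dp_car unfolding almost_hom_def by auto
  interpret fp: fp_setup G C S R Dp \<phi>
  proof (rule fp_setup.intro)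
    show "\<forall>r\<in>R. \<forall>k. word_eval G (drop k r) \<in> Dp" unfolding Dp_def using in_sufs by blast
    show "group G" by (rule G_group)
    show "group C" by (rule Cg)
    show "S \<subseteq> carrier G" by (rule S(2))
    show "R \<subseteq> lists (UNIV \<times> S)" by (rule R(2))
    show "\<forall>w\<in>lists (UNIV \<times> S). word_eval G w = \<one>\<^bsub>G\<^esub> \<longleftrightarrow> pres_equiv S R w []" by (rule pres)
    show "\<one>\<^bsub>G\<^esub> \<in> Dp" unfolding Dp_def by blast
    show "\<forall>x\<in>UNIV \<times> S. letter G x \<in> Dp" unfolding Dp_def by blast
    show "\<forall>x\<in>Dp. \<phi> x \<in> carrier C" by (rule phi_car)
    show "\<forall>h\<in>Dp. \<forall>g\<in>Dp. h \<otimes>\<^bsub>G\<^esub> g \<in> Dp \<longrightarrow> \<phi> (h \<otimes>\<^bsub>G\<^esub> g) = \<phi> h \<otimes>\<^bsub>C\<^esub> \<phi> g"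
      using ah unfolding almost_hom_def by blast
  qed
  define \<psi> where "\<psi> g = wimg C \<phi> G (wd g)" for g
  have psi_eval: "\<psi> (word_eval G w) = wimg C \<phi> G w" if w: "w \<in> lists (UNIV \<times> S)" for w
  proof -
    have "word_eval G w \<in> carrier G" using word_eval_car[OF G_group SGl[OF w]] .
    thus ?thesis unfolding \<psi>_def using fp.welldef wd w by blast
  qed
  have psi_hom: "\<psi> \<in> hom G C"
  proof (rule homI)
    fix x assume "x \<in> carrier G" thus "\<psi> x \<in> carrier C" unfolding \<psi>_def using wd fp.wimg_car by blast
  next
    fix x y assume x: "x \<in> carrier G" and y: "y \<in> carrier G"
    have e: "x \<otimes>\<^bsub>G\<^esub> y = word_eval G (wd x @ wd y)"
      using word_eval_append[OF G_group SGl SGl] wd x y by auto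
    have "\<psi> (x \<otimes>\<^bsub>G\<^esub> y) = wimg C \<phi> G (wd x @ wd y)"
      using e psi_eval wd x y by (metis append_in_lists_conv)
    thus "\<psi> (x \<otimes>\<^bsub>G\<^esub> y) = \<psi> x \<otimes>\<^bsub>C\<^esub> \<psi> y" unfolding \<psi>_def using fp.wimg_append wd x y by auto
  qed
  have psi_D: "\<psi> d = \<phi> d" if d: "d \<in> D" for d
  proof -
    have dc: "d \<in> carrier G" using d Dc by auto
    have "\<forall>k. word_eval G (drop k (wd d)) \<in> Dp" unfolding Dp_def using in_sufs d by blast
    hence "\<phi> (word_eval G (wd d)) = wimg C \<phi> G (wd d)" using fp.agree wd dc by blast
    thus ?thesis unfolding \<psi>_def using wd dc by simp
  qed
  have DDp: "D \<subseteq> Dp" unfolding Dp_def by auto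
  have "almost_hom G l C lC D Q \<psi>"
    unfolding almost_hom_def
  proof (intro conjI)
    show "\<psi> \<in> carrier G \<rightarrow> carrier C" using psi_hom by (simp add: hom_def)
    show "inj_on \<psi> D" using ah DDp psi_D unfolding almost_hom_def by (metis inj_on_cong inj_on_subset)
    show "\<forall>h\<in>D. \<forall>g\<in>D. h \<otimes>\<^bsub>G\<^esub> g \<in> D \<longrightarrow> \<psi> (h \<otimes>\<^bsub>G\<^esub> g) = \<psi> h \<otimes>\<^bsub>C\<^esub> \<psi> g"
      using psi_hom Dc by (auto simp: hom_def)
    show "\<forall>g\<in>D. \<forall>q\<in>Q. (l g < q) = (lC (\<psi> g) < q) \<and> (l g = q) = (lC (\<psi> g) = q) \<and> (q < l g) = (q < lC (\<psi> g))"
      using ah DDp psi_D unfolding almost_hom_def by auto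
  qed
  thus "\<exists>(C, lC)\<in>\<C>. \<exists>\<phi>\<in>hom G C. almost_hom G l C lC D Q \<phi>" using CC psi_hom by blast
qed

end
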